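(* Let $q$ be a prime power, $n \le m$, and let $\mathcal G(n,k)$ be a Gabidulin code of length $n$ and dimension $k$ over $\mathbb F_{q^m}$ with minimum rank distance $d = n-k+1$. Let $\tau < d$ and $\mathbf r \in \mathbb F_{q^m}^n$. Let $\mathbf c_1, \dots, \mathbf c_\ell$ be distinct codewords of $\mathcal G(n,k)$ with $\mathrm{rank}(\mathbf r - \mathbf c_i) \le \tau$ for all $i = 1,\dots,\ell$. Let $i \ne j$, $t_i = \mathrm{rank}(\mathbf r - \mathbf c_i)$, $t_j = \mathrm{rank}(\mathbf r - \mathbf c_j)$, with $\lfloor (d-1)/2 \rfloor < t_i, t_j \le \tau$. Then the row spaces $\mathcal R(\mathbf r - \mathbf c_i)$ and $\mathcal R(\mathbf r - \mathbf c_j)$ have no common subspace of dimension at least $t_i + t_j - d + 1$.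
   Context: A linearized polynomial over $\mathbb F_{q^m}$ is $f(x) = \sum_{i} f_i x^{q^i}$ with $f_i \in \mathbb F_{q^m}$; its $q$-degree is the largest $i$ with $f_i \neq 0$. The Gabidulin code $\mathcal G(n,k)$ is $\{(f(\alpha_0), \dots, f(\alpha_{n-1})) : \deg_q f < k\}$ for fixed $\alpha_0,\dots,\alpha_{n-1} \in \mathbb F_{q^m}$ linearly independent over $\mathbb F_q$. Fixing a basis of $\mathbb F_{q^m}$ over $\mathbb F_q$, each $\mathbf x \in \mathbb F_{q^m}^n$ corresponds to a matrix $\mathbf X \in \mathbb F_q^{m\times n}$; $\mathrm{rank}(\mathbf x)$ is the $\mathbb F_q$-rank of $\mathbf X$ and $\mathcal R(\mathbf x)$ is the row space of $\mathbf X$ over $\mathbb F_q$ (a subspace of $\mathbb F_q^n$). The minimum rank distance $d = \min\{\mathrm{rank}(\mathbf c) : \mathbf c \in \mathcal G(n,k), \mathbf c \ne 0\}$ equals $n-k+1$. *)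

theory Defs
  imports "HOL-Analysis.Analysis"
begin

text \<open>Setting: the small field F_q is a finite field type 'f (so q = CARD('f) is a
prime power), the large field F_{q^m} is a finite field type 'a, and emb embeds
F_q into F_{q^m}.  Vectors of length n are elements of 'a^'n with CARD('n) = n.\<close>

definition field_embedding :: "('f::field \<Rightarrow> 'a::field) \<Rightarrow> bool" where
  "field_embedding emb \<longleftrightarrow> emb 0 = 0 \<and> emb 1 = 1 \<and>
     (\<forall>x y. emb (x + y) = emb x + emb y) \<and> (\<forall>x y. emb (x * y) = emb x * emb y)"

definition ext_scale :: "('f::field \<Rightarrow> 'a::field) \<Rightarrow> 'f \<Rightarrow> 'a \<Rightarrow> 'a" where
  "ext_scale emb c x = emb c * x"

definition lin_poly_eval :: "nat \<Rightarrow> nat \<Rightarrow> (nat \<Rightarrow> 'a::field) \<Rightarrow> 'a \<Rightarrow> 'a" where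
  "lin_poly_eval q k f x = (\<Sum>i<k. f i * x ^ (q ^ i))"

definition gabidulin :: "nat \<Rightarrow> nat \<Rightarrow> 'a::field ^ 'n \<Rightarrow> ('a ^ 'n) set" where
  "gabidulin q k \<alpha> = {(\<chi> j. lin_poly_eval q k f (\<alpha> $ j)) | f. True}"

definition lin_indep_over :: "('f::field \<Rightarrow> 'a::field) \<Rightarrow> 'a ^ 'n::finite \<Rightarrow> bool" where
  "lin_indep_over emb \<alpha> \<longleftrightarrow>
     (\<forall>c :: 'n \<Rightarrow> 'f. (\<Sum>j\<in>UNIV. emb (c j) * \<alpha> $ j) = 0 \<longrightarrow> (\<forall>j. c j = 0))"

text \<open>Rank of x: the F_q-rank of its matrix expansion = dimension over F_q of the
span of its entries (the column space).\<close>
definition rank_weight :: "('f::field \<Rightarrow> 'a::field) \<Rightarrow> 'a ^ 'n \<Rightarrow> nat" where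
  "rank_weight emb x = vector_space.dim (ext_scale emb) (range (\<lambda>j. x $ j))"

text \<open>Row space R(x) in F_q^n of the matrix X: the span of the rows
(\<beta>_i(x_0),...,\<beta>_i(x_{n-1})), where \<beta>_i are coordinate functionals w.r.t. a basis;
this span equals the set of all (\<phi>(x_0),...,\<phi>(x_{n-1})) for F_q-linear \<phi> : F_{q^m} \<rightarrow> F_q,
which is basis independent.\<close>
definition row_space :: "('f::field \<Rightarrow> 'a::field) \<Rightarrow> 'a ^ 'n \<Rightarrow> ('f ^ 'n) set" where
  "row_space emb x = {(\<chi> j. \<phi> (x $ j)) | \<phi>. Vector_Spaces.linear (ext_scale emb) (*) \<phi>}"

end

theory Submission imports Defs "HOL-Algebra.Sylow" "HOL-Algebra.Multiplicative_Group" "HOL-Computational_Algebra.Polynomial" "HOL-Computational_Algebra.Primes"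
begin
lemma card_prime_divisor_is_char:
  fixes dummy :: "'f::{finite,field} itself"
  assumes r: "prime r" "r dvd CARD('f)"
  shows "r = CHAR('f)"
proof -
  define G where "G = \<lparr> carrier = (UNIV :: 'f set), monoid.mult = (+), one = (0 :: 'f) \<rparr>"
  have grp: "group G"
  proof (rule groupI)
    fix x assume x: "x \<in> carrier G"
    show "\<exists>y\<in>carrier G. y \<otimes>\<^bsub>G\<^esub> x = \<one>\<^bsub>G\<^esub>"
      by (intro bexI[of _ "-x"]) (auto simp: G_def)
  qed (auto simp: G_def add_ac)
  obtain m where m: "CARD('f) = r * m" using r by (auto elim: dvdE)
  have "order G = r ^ 1 * m" using m by (simp add: order_def G_def)
  then obtain H where H: "subgroup H G" "card H = r"
    using sylow_thm[OF r(1) grp, of 1 m] by (auto simp: G_def)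
  have "card H \<ge> 2" using H r prime_ge_2_nat by auto
  then obtain x where x: "x \<in> H" "x \<noteq> 0"
  proof -
    have "\<not> H \<subseteq> {0}"
    proof
      assume "H \<subseteq> {0}"
      hence "card H \<le> card {0::'f}" by (intro card_mono) auto
      thus False using \<open>card H \<ge> 2\<close> by simp
    qed
    then show ?thesis using that by auto
  qed
  interpret HG: group "G\<lparr>carrier := H\<rparr>"
    using H(1) grp by (simp add: group.subgroup_imp_group)
  have "x [^]\<^bsub>G\<lparr>carrier := H\<rparr>\<^esub> order (G\<lparr>carrier := H\<rparr>) = \<one>\<^bsub>G\<lparr>carrier := H\<rparr>\<^esub>"
    using x by (intro HG.pow_order_eq_1) auto
  moreover have "x [^]\<^bsub>G\<lparr>carrier := H\<rparr>\<^esub> (n::nat) = of_nat n * x" for n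
    by (induction n) (auto simp: G_def algebra_simps)
  ultimately have "of_nat r * x = 0" using H by (simp add: order_def G_def)
  hence "of_nat r = (0::'f)" using x by simp
  hence "CHAR('f) dvd r" by (simp add: of_nat_eq_0_iff_char_dvd)
  moreover have "prime CHAR('f)"
  proof -
    have "CHAR('f) > 0" by (rule finite_imp_CHAR_pos) simp
    thus ?thesis using prime_CHAR_semidom by blast
  qed
  ultimately show ?thesis using r by (metis prime_nat_iff prime_gt_1_nat less_irrefl)
qed

lemma all_factors_eq_power:
  fixes n p :: nat
  assumes "n > 0" "\<And>r. prime r \<Longrightarrow> r dvd n \<Longrightarrow> r = p"
  shows "\<exists>e. n = p^e"
  using assms
proof (induction n rule: less_induct)
  case (less n)
  show ?case
  proof (cases "n = 1")
    case True then show ?thesis by (intro exI[of _ 0]) simp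
  next
    case False
    then obtain r where r: "prime r" "r dvd n" using prime_factor_nat by blast
    hence rp: "r = p" using less.prems(2) by blast
    then obtain m where m: "n = p * m" using r by (auto elim: dvdE)
    have "m > 0" using m less.prems(1) by auto
    have "p > 1" using r rp prime_gt_1_nat by blast
    hence "m < n" using m \<open>m > 0\<close> by simp
    moreover have "\<And>s. prime s \<Longrightarrow> s dvd m \<Longrightarrow> s = p"
    proof -
      fix s :: nat assume "prime s" "s dvd m"
      hence "s dvd n" using m by simp
      thus "s = p" using less.prems(2) \<open>prime s\<close> by blast
    qed
    ultimately obtain e where "m = p^e" using less.IH[of m] \<open>m>0\<close> by blast
    thus ?thesis using m by (intro exI[of _ "Suc e"]) simp
  qed
qed

lemma card_char_power:
  "\<exists>e. CARD('f::{finite,field}) = CHAR('f)^e"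
  by (rule all_factors_eq_power) (auto intro: card_prime_divisor_is_char)

lemma finite_field_pow_card:
  fixes x :: "'a :: {finite,field}"
  shows   "x ^ CARD('a) = x"
proof (cases "x = 0")
  case False
  have "x * (\<Prod>y\<in>UNIV-{0}. x * y) = x * x ^ (card (UNIV :: 'a set) - 1) * \<Prod>(UNIV-{0})"
    by (simp add: prod.distrib mult_ac)
  also have "x * x ^ (card (UNIV :: 'a set) - 1) = x ^ Suc (card (UNIV :: 'a set) - 1)"
    by (subst power_Suc) auto
  also have "Suc (card (UNIV :: 'a set) - 1) = card (UNIV :: 'a set)"
    using finite_UNIV_card_ge_0[where ?'a = 'a] by simp
  also have "(\<Prod>y\<in>UNIV-{0}. x * y) = (\<Prod>y\<in>UNIV-{0}. y)"
    by (rule prod.reindex_bij_witness[of _ "\<lambda>y. y / x" "\<lambda>y. x * y"]) (use False in auto)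
  finally show ?thesis
    by simp
qed (use finite_UNIV_card_ge_0[where ?'a = 'a] in auto)

context
  fixes emb :: "'f::{finite,field} \<Rightarrow> 'a::{finite,field}"
  assumes emb: "field_embedding emb"
begin

lemma emb_0[simp]: "emb 0 = 0" and emb_1[simp]: "emb 1 = 1"
  and emb_add[simp]: "emb (x + y) = emb x + emb y" and emb_mult[simp]: "emb (x * y) = emb x * emb y"
  using emb by (auto simp: field_embedding_def)

lemma emb_uminus[simp]: "emb (- x) = - emb x"
proof -
  have "emb x + emb (-x) = 0" by (metis emb_add emb_0 add.right_inverse)
  thus ?thesis by (simp add: eq_neg_iff_add_eq_0 add.commute)
qed

lemma emb_diff[simp]: "emb (x - y) = emb x - emb y"
  by (metis diff_conv_add_uminus emb_add emb_uminus)

lemma emb_of_nat[simp]: "emb (of_nat n) = of_nat n"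
  by (induction n) auto

lemma emb_power[simp]: "emb (x ^ n) = emb x ^ n"
  by (induction n) auto

lemma emb_eq_0_iff[simp]: "emb x = 0 \<longleftrightarrow> x = 0"
proof
  assume "emb x = 0"
  show "x = 0"
  proof (rule ccontr)
    assume "x \<noteq> 0"
    hence "emb x * emb (inverse x) = 1" by (metis emb_1 emb_mult right_inverse)
    thus False using \<open>emb x = 0\<close> by simp
  qed
qed simp

lemma inj_emb: "inj emb"
  by (rule injI) (metis emb_diff emb_eq_0_iff eq_iff_diff_eq_0)

lemma char_emb: "CHAR('a) = CHAR('f)"
proof -
  have "of_nat n = (0::'a) \<longleftrightarrow> of_nat n = (0::'f)" for n
    by (metis emb_eq_0_iff emb_of_nat)
  hence "of_nat CHAR('a) = (0::'f)" "of_nat CHAR('f) = (0::'a)"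
    by (metis of_nat_CHAR)+
  hence "CHAR('f) dvd CHAR('a)" "CHAR('a) dvd CHAR('f)"
    by (simp_all only: of_nat_eq_0_iff_char_dvd)
  thus ?thesis using dvd_antisym by blast
qed

lemma prime_char_a: "prime CHAR('a)"
proof -
  have "CHAR('a) > 0" by (rule finite_imp_CHAR_pos) simp
  thus ?thesis using prime_CHAR_semidom by blast
qed

lemma frob_add: "(x + y :: 'a) ^ (CARD('f)^s) = x ^ (CARD('f)^s) + y ^ (CARD('f)^s)"
proof -
  obtain e where e: "CARD('f) = CHAR('f)^e" using card_char_power by blast
  have "CARD('f) ^ s = CHAR('a) ^ (e * s)" by (simp add: e char_emb power_mult)
  thus ?thesis using freshmans_dream'[OF prime_char_a] by metis
qed

lemma emb_frob: "emb c ^ (CARD('f)^s) = emb c"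
proof (induction s)
  case (Suc s)
  have "emb c ^ (CARD('f)^Suc s) = (emb c ^ (CARD('f)^s)) ^ CARD('f)"
    by (simp add: power_mult[symmetric] mult.commute)
  also have "\<dots> = emb (c ^ CARD('f))" using Suc by simp
  also have "\<dots> = emb c" by (simp add: finite_field_pow_card)
  finally show ?case .
qed simp


lemma vs: "vector_space (ext_scale emb)"
  by unfold_locales (auto simp: ext_scale_def algebra_simps)

lemma card_f_ge2: "CARD('f) \<ge> 2"
proof -
  have "card {0::'f, 1} \<le> CARD('f)" by (rule card_mono) auto
  thus ?thesis by simp
qed

lemma L_add: "lin_poly_eval CARD('f) k (f::nat\<Rightarrow>'a) (x + y) = lin_poly_eval CARD('f) k f x + lin_poly_eval CARD('f) k f y"
  by (simp add: lin_poly_eval_def frob_add sum.distrib distrib_left)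

lemma L_scale: "lin_poly_eval CARD('f) k (f::nat\<Rightarrow>'a) (emb c * x) = emb c * lin_poly_eval CARD('f) k f x"
  by (simp add: lin_poly_eval_def power_mult_distrib emb_frob sum_distrib_left mult_ac)

lemma L_0: "lin_poly_eval CARD('f) k (f::nat\<Rightarrow>'a) 0 = 0"
  using finite_UNIV_card_ge_0[where ?'a = 'f] by (simp add: lin_poly_eval_def power_0_left)

lemma L_sum: "lin_poly_eval CARD('f) k (f::nat\<Rightarrow>'a) (\<Sum>i\<in>A. g i) = (\<Sum>i\<in>A. lin_poly_eval CARD('f) k f (g i))"
  by (induction A rule: infinite_finite_induct) (auto simp: L_0 L_add)

lemma L_diff: "lin_poly_eval CARD('f) k (f::nat\<Rightarrow>'a) (x - y) = lin_poly_eval CARD('f) k f x - lin_poly_eval CARD('f) k f y"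
  by (metis L_add diff_add_cancel eq_diff_eq)

lemma L_roots:
  assumes "s0 < k" "(f::nat\<Rightarrow>'a) s0 \<noteq> 0"
  shows "card {x. lin_poly_eval CARD('f) k f x = 0} \<le> CARD('f) ^ (k - 1)"
proof -
  define q where "q = CARD('f)"
  have q2: "q \<ge> 2" using card_f_ge2 by (simp add: q_def)
  define P where "P = (\<Sum>s<k. Polynomial.monom (f s) (q ^ s))"
  have ev: "poly P x = lin_poly_eval CARD('f) k f x" for x
    by (simp add: P_def poly_sum poly_monom lin_poly_eval_def q_def)
  have "Polynomial.coeff P (q ^ s0) = (\<Sum>s<k. if q ^ s = q ^ s0 then f s else 0)"
    by (simp add: P_def coeff_sum)
  also have "\<dots> = (\<Sum>s<k. if s = s0 then f s else 0)"
    using q2 by (intro sum.cong refl) (simp add: power_inject_exp)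
  also have "\<dots> = f s0" using assms(1) by simp
  finally have "P \<noteq> 0" using assms(2) by auto
  have "degree P \<le> q ^ (k - 1)"
    unfolding P_def
  proof (rule degree_sum_le)
    fix s assume "s \<in> {..<k}"
    hence "q ^ s \<le> q ^ (k - 1)" using q2 by (intro power_increasing) auto
    thus "degree (Polynomial.monom (f s) (q ^ s)) \<le> q ^ (k - 1)" using degree_monom_le order_trans by blast
  qed simp
  moreover have "card {x. poly P x = 0} \<le> degree P" by (rule card_poly_roots_bound) fact
  ultimately show ?thesis by (simp add: ev q_def)
qed


lemma span_card:
  "card (module.span (ext_scale emb) S) \<le> CARD('f) ^ vector_space.dim (ext_scale emb) S"
proof -
  interpret V: vector_space "ext_scale emb" by (rule vs)
  obtain B where B: "B \<subseteq> S" "V.independent B" "S \<subseteq> V.span B" "card B = V.dim S"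
    using V.basis_exists by blast
  have fB: "finite B" by simp
  have "V.span S \<subseteq> V.span B" using B(3) by (simp add: V.span_minimal V.subspace_span)
  moreover have "V.span B \<subseteq> V.span S" using B(1) by (rule V.span_mono)
  ultimately have eq: "V.span S = V.span B" by blast
  define g where "g = (\<lambda>u. \<Sum>v\<in>B. ext_scale emb (u v) v)"
  have "V.span B = range g" unfolding g_def by (rule V.span_finite[OF fB])
  also have "\<dots> \<subseteq> g ` (PiE B (\<lambda>_. UNIV))"
  proof
    fix y assume "y \<in> range g"
    then obtain u where y: "y = g u" by blast
    have "g u = g (restrict u B)" unfolding g_def by (intro sum.cong) auto
    moreover have "restrict u B \<in> PiE B (\<lambda>_. UNIV)" by auto
    ultimately show "y \<in> g ` (PiE B (\<lambda>_. UNIV))" using y by blast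
  qed
  finally have "card (V.span B) \<le> card (g ` (PiE B (\<lambda>_. UNIV)))" by (intro card_mono) auto
  also have "\<dots> \<le> card (PiE B (\<lambda>_. (UNIV::'f set)))" by (rule card_image_le) (simp add: fB finite_PiE)
  also have "\<dots> = CARD('f) ^ card B" by (simp add: card_PiE fB)
  finally show ?thesis using eq B(4) by simp
qed

lemma min_rank:
  fixes \<alpha> e :: "'a ^ 'n"
  assumes alpha: "lin_indep_over emb \<alpha>"
    and e: "e = (\<chi> j. lin_poly_eval CARD('f) k h (\<alpha> $ j))"
    and ne: "e \<noteq> 0" and kn: "k \<le> CARD('n)"
  shows "CARD('n) - k + 1 \<le> rank_weight emb e"
proof -
  interpret V: vector_space "ext_scale emb" by (rule vs)
  define q where "q = CARD('f)"
  have q2: "q \<ge> 2" using card_f_ge2 by (simp add: q_def)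
  define L where "L = lin_poly_eval CARD('f) k h"
  obtain s0 where s0: "s0 < k" "h s0 \<noteq> 0"
  proof -
    have "\<exists>s0<k. h s0 \<noteq> 0"
    proof (rule ccontr)
      assume "\<not> ?thesis"
      hence "\<And>x. L x = 0" by (simp add: L_def lin_poly_eval_def)
      hence "e = 0" by (simp add: e L_def[symmetric] vec_eq_iff)
      thus False using ne by simp
    qed
    thus ?thesis using that by blast
  qed
  define A where "A = (\<lambda>v::'f^'n. \<Sum>j\<in>UNIV. emb (v $ j) * \<alpha> $ j)"
  have "inj A"
  proof (rule injI)
    fix v w assume "A v = A w"
    hence "(\<Sum>j\<in>UNIV. emb ((v - w) $ j) * \<alpha> $ j) = 0"
      by (simp add: A_def algebra_simps sum_subtractf)
    hence "\<forall>j. (v - w) $ j = 0" using alpha unfolding lin_indep_over_def by blast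
    thus "v = w" by (simp add: vec_eq_iff)
  qed
  hence cardA: "card (range A) = q ^ CARD('n)" by (simp add: card_image q_def)
  define K where "K = {x. L x = 0}"
  have cardK: "card K \<le> q ^ (k - 1)" unfolding K_def L_def q_def by (rule L_roots[of s0 k h, OF s0])
  define T where "T = L ` range A"
  have "T \<subseteq> V.span (range (\<lambda>j. e $ j))"
  proof
    fix z assume "z \<in> T"
    then obtain v where z: "z = L (A v)" by (auto simp: T_def)
    have "L (A v) = (\<Sum>j\<in>UNIV. ext_scale emb (v $ j) (e $ j))"
      by (simp add: A_def L_def L_sum L_scale e ext_scale_def)
    also have "\<dots> \<in> V.span (range (\<lambda>j. e $ j))"
      by (intro V.span_sum V.span_scale V.span_base) auto
    finally show "z \<in> V.span (range (\<lambda>j. e $ j))" using z by simp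
  qed
  hence "card T \<le> card (V.span (range (\<lambda>j. e $ j)))" by (intro card_mono) auto
  also have "\<dots> \<le> q ^ rank_weight emb e"
    using span_card by (simp add: rank_weight_def q_def)
  finally have cardT: "card T \<le> q ^ rank_weight emb e" .
  have fib: "card {y. L y = z} \<le> q ^ (k - 1)" if "z \<in> T" for z
  proof -
    obtain y0 where z: "z = L y0" using \<open>z \<in> T\<close> by (auto simp: T_def)
    have "{y. L y = z} \<subseteq> (\<lambda>u. y0 + u) ` K"
    proof
      fix y assume "y \<in> {y. L y = z}"
      hence "L (y - y0) = 0" using z by (simp add: L_def L_diff)
      hence "y - y0 \<in> K" by (simp add: K_def)
      thus "y \<in> (\<lambda>u. y0 + u) ` K" by (intro image_eqI[of _ _ "y - y0"]) auto
    qed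
    hence "card {y. L y = z} \<le> card ((\<lambda>u. y0 + u) ` K)" by (intro card_mono) auto
    also have "\<dots> \<le> card K" by (rule card_image_le) simp
    finally show ?thesis using cardK by simp
  qed
  have "range A \<subseteq> (\<Union>z\<in>T. {y. L y = z})" by (auto simp: T_def)
  hence "card (range A) \<le> card (\<Union>z\<in>T. {y. L y = z})" by (intro card_mono) auto
  also have "\<dots> \<le> (\<Sum>z\<in>T. card {y. L y = z})" by (rule card_UN_le) simp
  also have "\<dots> \<le> card T * q ^ (k - 1)" using fib sum_bounded_above[of T "\<lambda>z. card {y. L y = z}"] by simp
  also have "\<dots> \<le> q ^ rank_weight emb e * q ^ (k - 1)" using cardT by simp
  also have "\<dots> = q ^ (rank_weight emb e + (k - 1))" by (simp add: power_add)
  finally have "q ^ CARD('n) \<le> q ^ (rank_weight emb e + (k - 1))" using cardA by simp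
  hence "CARD('n) \<le> rank_weight emb e + (k - 1)" using q2 by (simp add: power_le_imp_le_exp)
  thus ?thesis using s0(1) kn by arith
qed


lemma lin_char:
  "Vector_Spaces.linear (ext_scale emb) (*) \<phi> \<longleftrightarrow>
     (\<forall>x y. \<phi> (x + y) = \<phi> x + \<phi> y) \<and> (\<forall>c x. \<phi> (emb c * x) = c * \<phi> x)"
  unfolding Vector_Spaces.linear_iff ext_scale_def
  using vs[unfolded ext_scale_def[abs_def]] vector_space_over_itself.vector_space_axioms
  by (auto simp: ext_scale_def)

lemma lin_0: "Vector_Spaces.linear (ext_scale emb) (*) \<phi> \<Longrightarrow> \<phi> 0 = 0"
  by (metis add_cancel_right_right lin_char)

lemma lin_diff: "Vector_Spaces.linear (ext_scale emb) (*) \<phi> \<Longrightarrow> \<phi> (x - y) = \<phi> x - \<phi> y"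
  by (metis diff_add_cancel eq_diff_eq lin_char)

lemma lin_sum: "Vector_Spaces.linear (ext_scale emb) (*) \<phi> \<Longrightarrow> \<phi> (\<Sum>i\<in>A. g i) = (\<Sum>i\<in>A. \<phi> (g i))"
  by (induction A rule: infinite_finite_induct) (auto simp: lin_0 lin_char)

lemma row_space_subspace: "vec.subspace (row_space emb x)"
  unfolding vec.subspace_def
proof (intro conjI ballI allI)
  show "0 \<in> row_space emb x"
    unfolding row_space_def
    by (intro CollectI exI[of _ "\<lambda>_. 0"]) (auto simp: lin_char vec_eq_iff)
next
  fix u v assume "u \<in> row_space emb x" "v \<in> row_space emb x"
  then obtain \<phi> \<psi> where u: "u = (\<chi> j. \<phi> (x $ j))" "Vector_Spaces.linear (ext_scale emb) (*) \<phi>"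
    and v: "v = (\<chi> j. \<psi> (x $ j))" "Vector_Spaces.linear (ext_scale emb) (*) \<psi>"
    by (auto simp: row_space_def)
  show "u + v \<in> row_space emb x"
    unfolding row_space_def
    by (intro CollectI exI[of _ "\<lambda>y. \<phi> y + \<psi> y"])
       (use u v in \<open>auto simp: lin_char vec_eq_iff algebra_simps\<close>)
next
  fix c u assume "u \<in> row_space emb x"
  then obtain \<phi> where u: "u = (\<chi> j. \<phi> (x $ j))" "Vector_Spaces.linear (ext_scale emb) (*) \<phi>"
    by (auto simp: row_space_def)
  show "c *s u \<in> row_space emb x"
    unfolding row_space_def
    by (intro CollectI exI[of _ "\<lambda>y. c * \<phi> y"])
       (use u in \<open>auto simp: lin_char vec_eq_iff algebra_simps\<close>)
qed

lemma row_space_diff: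
  "row_space emb (x - y) \<subseteq> {a + b | a b. a \<in> row_space emb x \<and> b \<in> row_space emb y}"
proof
  fix u assume "u \<in> row_space emb (x - y)"
  then obtain \<phi> where u: "u = (\<chi> j. \<phi> ((x - y) $ j))" and l: "Vector_Spaces.linear (ext_scale emb) (*) \<phi>"
    by (auto simp: row_space_def)
  have "(\<chi> j. \<phi> (x $ j)) \<in> row_space emb x" using l by (auto simp: row_space_def)
  moreover have "(\<chi> j. - \<phi> (y $ j)) \<in> row_space emb y"
    unfolding row_space_def
    by (intro CollectI exI[of _ "\<lambda>z. - \<phi> z"]) (use l in \<open>auto simp: lin_char\<close>)
  moreover have "u = (\<chi> j. \<phi> (x $ j)) + (\<chi> j. - \<phi> (y $ j))"
    using l by (simp add: u vec_eq_iff lin_diff)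
  ultimately show "u \<in> {a + b | a b. a \<in> row_space emb x \<and> b \<in> row_space emb y}" by blast
qed

lemma row_dim_le: "vec.dim (row_space emb (x :: 'a ^ 'n)) \<le> rank_weight emb x"
proof -
  interpret V: vector_space "ext_scale emb" by (rule vs)
  define X where "X = range (\<lambda>j. x $ j)"
  obtain B where B: "B \<subseteq> X" "V.independent B" "X \<subseteq> V.span B" "card B = V.dim X"
    using V.basis_exists by blast
  have fB: "finite B" by simp
  define w where "w = (\<lambda>b. \<chi> j. V.representation B (x $ j) b)"
  have "row_space emb x \<subseteq> vec.span (w ` B)"
  proof
    fix u assume "u \<in> row_space emb x"
    then obtain \<phi> where u: "u = (\<chi> j. \<phi> (x $ j))" and l: "Vector_Spaces.linear (ext_scale emb) (*) \<phi>"
      by (auto simp: row_space_def)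
    have "\<phi> (x $ j) = (\<Sum>b\<in>B. V.representation B (x $ j) b * \<phi> b)" for j
    proof -
      have "x $ j \<in> V.span B" using B(3) by (auto simp: X_def)
      hence "x $ j = (\<Sum>b\<in>B. ext_scale emb (V.representation B (x $ j) b) b)"
        using V.sum_representation_eq[OF B(2) _ fB subset_refl] by simp
      hence "\<phi> (x $ j) = \<phi> (\<Sum>b\<in>B. ext_scale emb (V.representation B (x $ j) b) b)" by simp
      also have "\<dots> = (\<Sum>b\<in>B. V.representation B (x $ j) b * \<phi> b)"
        using l by (simp add: lin_sum ext_scale_def lin_char)
      finally show ?thesis .
    qed
    hence "u = (\<Sum>b\<in>B. \<phi> b *s w b)"
      by (simp add: u vec_eq_iff w_def mult.commute)
    also have "\<dots> \<in> vec.span (w ` B)"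
      by (intro vec.span_sum vec.span_scale vec.span_base) auto
    finally show "u \<in> vec.span (w ` B)" .
  qed
  hence "vec.dim (row_space emb x) \<le> card (w ` B)" by (intro vec.dim_le_card) (simp_all add: fB)
  also have "\<dots> \<le> card B" by (rule card_image_le[OF fB])
  finally show ?thesis using B(4) by (simp add: rank_weight_def X_def)
qed

lemma row_dim_ge: "rank_weight emb (x :: 'a ^ 'n) \<le> vec.dim (row_space emb x)"
proof -
  interpret V: vector_space "ext_scale emb" by (rule vs)
  define X where "X = range (\<lambda>j. x $ j)"
  obtain B where B: "B \<subseteq> X" "V.independent B" "X \<subseteq> V.span B" "card B = V.dim X"
    using V.basis_exists by blast
  have fB: "finite B" by simp
  define sj where "sj = (\<lambda>b. SOME j. x $ j = b)"
  have sj: "x $ sj b = b" if "b \<in> B" for b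
  proof -
    have "\<exists>j. x $ j = b" using that B(1) by (auto simp: X_def)
    thus ?thesis unfolding sj_def by (rule someI_ex)
  qed
  have inj_sj: "inj_on sj B" by (rule inj_onI) (metis sj)
  define J where "J = sj ` B"
  have cardJ: "card J = card B" unfolding J_def by (rule card_image[OF inj_sj])
  define E where "E = V.extend_basis B"
  have E: "B \<subseteq> E" "V.independent E" "V.span E = UNIV"
    using V.extend_basis_superset[OF B(2)] V.independent_extend_basis[OF B(2)]
      V.span_extend_basis[OF B(2)] by (auto simp: E_def)
  define P where "P = (\<lambda>v::'f^'n. \<chi> j. if j \<in> J then v $ j else 0)"
  have linP: "Vector_Spaces.linear (*s) (*s) P"
    unfolding Vector_Spaces.linear_iff using vec.vector_space_axioms
    by (auto simp: P_def vec_eq_iff)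
  have "(\<lambda>i. axis i (1::'f)) ` J \<subseteq> P ` row_space emb x"
  proof
    fix a assume "a \<in> (\<lambda>i. axis i (1::'f)) ` J"
    then obtain b where b: "b \<in> B" "a = axis (sj b) 1" by (auto simp: J_def)
    define u where "u = (\<chi> j. V.representation E (x $ j) b)"
    have "u \<in> row_space emb x"
      unfolding row_space_def u_def
      by (intro CollectI exI[of _ "\<lambda>v. V.representation E v b"])
         (use V.linear_representation[OF E(2) E(3), of b] in auto)
    moreover have "P u = a"
    proof (subst vec_eq_iff, intro allI)
      fix j
      show "P u $ j = a $ j"
      proof (cases "j \<in> J")
        case True
        then obtain b' where b': "b' \<in> B" "j = sj b'" by (auto simp: J_def)
        have "V.representation E (x $ j) b = (if b = b' then 1 else 0)"
          using V.representation_basis[OF E(2), of b'] b' E(1) sj by auto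
        moreover have "(j = sj b) \<longleftrightarrow> b = b'"
          using b' b inj_sj by (auto dest: inj_onD)
        ultimately show ?thesis using True b by (auto simp: P_def u_def axis_def)
      next
        case False
        hence "j \<noteq> sj b" using b by (auto simp: J_def)
        thus ?thesis using False b by (simp add: P_def axis_def)
      qed
    qed
    ultimately show "a \<in> P ` row_space emb x" by blast
  qed
  have indep: "vec.independent ((\<lambda>i. axis i (1::'f)) ` J)"
    by (rule vec.independent_mono[OF vec.independent_Basis]) (auto simp: cart_basis_def)
  have "card ((\<lambda>i. axis i (1::'f)) ` J) = card J"
    by (rule card_image) (auto simp: inj_on_def axis_eq_axis)
  hence "card J \<le> vec.dim (P ` row_space emb x)"
    using vec.independent_card_le_dim[OF \<open>(\<lambda>i. axis i (1::'f)) ` J \<subseteq> P ` row_space emb x\<close> indep]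
    by simp
  also have "\<dots> \<le> vec.dim (row_space emb x)" by (rule vec.dim_image_le[OF linP])
  finally show ?thesis using cardJ B(4) by (simp add: rank_weight_def X_def)
qed

end

theorem lemma1:
  fixes emb :: "'f::{finite,field} \<Rightarrow> 'a::{finite,field}"
    and \<alpha> r :: "'a ^ 'n"
    and c :: "nat \<Rightarrow> 'a ^ 'n"
    and m k \<tau> l i j :: nat
  assumes emb: "field_embedding emb"
    and card_big: "CARD('a) = CARD('f) ^ m"
    and n_le_m: "CARD('n) \<le> m"
    and k_pos: "0 < k" and k_le_n: "k \<le> CARD('n)"
    and alpha: "lin_indep_over emb \<alpha>"
    and tau: "\<tau> < CARD('n) - k + 1"
    and c_code: "\<forall>s\<in>{1..l}. c s \<in> gabidulin CARD('f) k \<alpha>"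
    and c_dist: "inj_on c {1..l}"
    and c_close: "\<forall>s\<in>{1..l}. rank_weight emb (r - c s) \<le> \<tau>"
    and ij: "i \<in> {1..l}" "j \<in> {1..l}" "i \<noteq> j"
    and ti: "(CARD('n) - k + 1 - 1) div 2 < rank_weight emb (r - c i)"
    and tj: "(CARD('n) - k + 1 - 1) div 2 < rank_weight emb (r - c j)"
  shows "\<not> (\<exists>U. vec.subspace U \<and> U \<subseteq> row_space emb (r - c i) \<inter> row_space emb (r - c j) \<and>
              vec.dim U \<ge> rank_weight emb (r - c i) + rank_weight emb (r - c j)
                           - (CARD('n) - k + 1) + 1)"
proof
  assume "\<exists>U. vec.subspace U \<and> U \<subseteq> row_space emb (r - c i) \<inter> row_space emb (r - c j) \<and>
              vec.dim U \<ge> rank_weight emb (r - c i) + rank_weight emb (r - c j)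
                           - (CARD('n) - k + 1) + 1"
  then obtain U where U: "vec.subspace U" "U \<subseteq> row_space emb (r - c i) \<inter> row_space emb (r - c j)"
    "vec.dim U \<ge> rank_weight emb (r - c i) + rank_weight emb (r - c j) - (CARD('n) - k + 1) + 1"
    by blast
  define d where "d = CARD('n) - k + 1"
  define Ri where "Ri = row_space emb (r - c i)"
  define Rj where "Rj = row_space emb (r - c j)"
  define ti where "ti = rank_weight emb (r - c i)"
  define tj where "tj = rank_weight emb (r - c j)"
  have dRi: "vec.dim Ri = ti" unfolding Ri_def ti_def
    using row_dim_le[OF emb] row_dim_ge[OF emb] le_antisym by blast
  have dRj: "vec.dim Rj = tj" unfolding Rj_def tj_def
    using row_dim_le[OF emb] row_dim_ge[OF emb] le_antisym by blast
  obtain f where f: "c i = (\<chi> s. lin_poly_eval CARD('f) k f (\<alpha> $ s))"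
  proof -
    have "c i \<in> gabidulin CARD('f) k \<alpha>" using c_code ij(1) by blast
    thus ?thesis using that unfolding gabidulin_def by blast
  qed
  obtain g where g: "c j = (\<chi> s. lin_poly_eval CARD('f) k g (\<alpha> $ s))"
  proof -
    have "c j \<in> gabidulin CARD('f) k \<alpha>" using c_code ij(2) by blast
    thus ?thesis using that unfolding gabidulin_def by blast
  qed
  have diff: "c i - c j = (\<chi> s. lin_poly_eval CARD('f) k (\<lambda>t. f t - g t) (\<alpha> $ s))"
    by (simp add: f g vec_eq_iff lin_poly_eval_def sum_subtractf left_diff_distrib)
  have ne: "c i - c j \<noteq> 0" using c_dist ij inj_onD by fastforce
  have "d \<le> rank_weight emb (c i - c j)"
    unfolding d_def by (rule min_rank[OF emb alpha diff ne k_le_n])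
  also have "\<dots> \<le> vec.dim (row_space emb (c i - c j))" by (rule row_dim_ge[OF emb])
  also have "c i - c j = (r - c j) - (r - c i)" by simp
  also have "vec.dim (row_space emb ((r - c j) - (r - c i))) \<le> vec.dim {a + b | a b. a \<in> Rj \<and> b \<in> Ri}"
    unfolding Ri_def Rj_def by (intro vec.dim_subset row_space_diff[OF emb])
  finally have d_le: "d \<le> vec.dim {a + b | a b. a \<in> Rj \<and> b \<in> Ri}" .
  have sums: "vec.dim {a + b | a b. a \<in> Rj \<and> b \<in> Ri} + vec.dim (Rj \<inter> Ri) = tj + ti"
    using vec.dim_sums_Int[OF row_space_subspace[OF emb, of "r - c j"] row_space_subspace[OF emb, of "r - c i"]]
    unfolding dRi[symmetric] dRj[symmetric] Ri_def Rj_def by simp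
  have "vec.dim U \<le> vec.dim (Rj \<inter> Ri)" using U(2) unfolding Ri_def Rj_def
    by (intro vec.dim_subset) auto
  moreover have "d \<le> ti + tj" using ti tj unfolding d_def ti_def tj_def by linarith
  ultimately show False using U(3) d_le sums unfolding d_def[symmetric] ti_def[symmetric] tj_def[symmetric]
    by linarith
qed

end
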